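(* For all integers $k\geq 1$ and $n\geq 0$, \[ f_{n}^{(k)}= \sum_{j=0}^{\lfloor n/(k+1)\rfloor} (-1)^j\,\frac{(n-jk)+j+\delta_{n,0}}{2(n-jk)+\delta_{n,0}}\, \binom{n-jk}{j}\, 2^{n-j(k+1)}, \] where $\delta_{n,0}$ is the Kronecker delta ($\delta_{n,0}=1$ if $n=0$ and $0$ otherwise).
   Context: For an integer $k\geq 1$, the $k$-bonacci numbers $f_n^{(k)}$ ($n\in\mathbb{Z}$) are defined by $f_n^{(k)}=0$ for $n<0$, $f_0^{(k)}=1$, and $f_n^{(k)}=\sum_{i=1}^{k} f_{n-i}^{(k)}$ for $n\geq 1$. Here $\lfloor x\rfloor$ is the floor function. *)

theory Defs
  imports Complex_Main
begin

function kbonacci :: "nat \<Rightarrow> int \<Rightarrow> int" where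
  "kbonacci k n =
     (if n < 0 then 0
      else if n = 0 then 1
      else (\<Sum>i\<in>{1..k}. kbonacci k (n - int i)))"
  by auto
termination
  by (relation "measure (\<lambda>(k, n). nat (n + 1))") auto

end

theory Submission
  imports Defs
begin

declare kbonacci.simps[simp del]

definition P :: "nat \<Rightarrow> nat \<Rightarrow> nat \<Rightarrow> int" where
  "P k n j = (-1)^j * int ((n - j*k) choose j) * 2^(n - j*(k+1))"

definition bn :: "nat \<Rightarrow> nat \<Rightarrow> int" where
  "bn k n = (\<Sum>j\<le>n. P k n j)"

lemma P_zero: assumes "n < j*(k+1)" shows "P k n j = 0"
proof -
  have a: "n < j*k + j" using assms by (simp add: algebra_simps)
  have "n - j*k < j"
  proof (cases "j*k \<le> n")
    case True then show ?thesis using a by linarith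
  next
    case False then show ?thesis using a by (cases j) auto
  qed
  thus ?thesis by (simp add: P_def binomial_eq_0)
qed

lemma bn_range: assumes "n div (k+1) \<le> N" shows "bn k n = (\<Sum>j\<le>N. P k n j)"
proof -
  have z: "P k n j = 0" if "n div (k+1) < j" for j
  proof -
    have "n < j*(k+1)" using that div_less_iff_less_mult[of "k+1" n j] by simp
    thus ?thesis by (rule P_zero)
  qed
  have A: "(\<Sum>j\<le>n. P k n j) = (\<Sum>j\<le>n div (k+1). P k n j)"
    by (rule sum.mono_neutral_right) (auto intro!: z div_le_dividend)
  have B: "(\<Sum>j\<le>N. P k n j) = (\<Sum>j\<le>n div (k+1). P k n j)"
    by (rule sum.mono_neutral_right) (use assms in \<open>auto intro!: z\<close>)
  show ?thesis using A B by (simp add: bn_def)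
qed

lemma aux2:
  fixes A B q x s :: int
  assumes "2 * (A * q) = A * x"
  shows "s * (A + B) * x = 2 * (s * A * q) - (- s) * B * x"
proof -
  have "2 * (s * A * q) = s * (2 * (A * q))" by (simp add: ac_simps)
  also have "\<dots> = s * A * x" using assms by simp
  finally have h: "2 * (s * A * q) = s * A * x" .
  show ?thesis unfolding h by (simp add: algebra_simps)
qed

lemma P_rec:
  assumes "1 \<le> n" "1 \<le> j"
  shows "P k n j = 2 * P k (n-1) j - (if k+1 \<le> n then P k (n-k-1) (j-1) else 0)"
proof -
  obtain j' where j: "j = Suc j'" using assms by (cases j) auto
  show ?thesis
  proof (cases "j*(k+1) \<le> n")
    case False
    have jj: "j*(k+1) = j'*(k+1) + (k+1)" using j by simp
    have "P k n j = 0" "P k (n-1) j = 0" using False by (auto intro!: P_zero)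
    moreover have "k+1 \<le> n \<Longrightarrow> P k (n-k-1) (j-1) = 0"
      using False jj j by (intro P_zero) auto
    ultimately show ?thesis by simp
  next
    case True
    define m where "m = n - j*k"
    define e where "e = n - j*(k+1)"
    have jk: "j*(k+1) = j*k + j" by simp
    have jk2: "j*k = j'*k + k" using j by simp
    have jk3: "j'*(k+1) = j'*k + j'" by simp
    have m: "m = e + j" using True jk by (simp add: m_def e_def)
    have kn: "k+1 \<le> n" using True j by (simp add: algebra_simps)
    have h1: "n - 1 - j*k = m - 1" unfolding m_def by simp
    have h2: "n - 1 - j*(k+1) = e - 1" unfolding e_def by simp
    have h3: "n - k - 1 - j'*k = m - 1" unfolding m_def using jk2 kn True jk by linarith
    have h4: "n - k - 1 - j'*(k+1) = e" unfolding e_def using jk2 jk3 kn True jk j by linarith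
    have m1: "m - 1 = e + j'" using m j by simp
    have pascal: "int (m choose j) = int ((m-1) choose j) + int ((m-1) choose j')"
      using m j by simp
    have pw: "2 * (int ((m-1) choose j) * 2^(e-1)) = int ((m-1) choose j) * 2^e"
    proof (cases e)
      case 0 then show ?thesis using m1 j by (simp add: binomial_eq_0)
    next
      case (Suc e') then show ?thesis by simp
    qed
    have e0: "P k n j = (-1)^j * int (m choose j) * 2^e" unfolding P_def m_def e_def ..
    have e1: "P k (n-1) j = (-1)^j * int ((m-1) choose j) * 2^(e-1)"
      unfolding P_def h1 h2 ..
    have e2: "P k (n-k-1) (j-1) = (-1)^j' * int ((m-1) choose j') * 2^e"
    proof -
      have jm: "j - 1 = j'" using j by simp
      show ?thesis unfolding P_def jm h3 h4 ..
    qed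
    have sj: "(-1::int)^j' = - ((-1)^j)" using j by simp
    have "P k n j = (-1)^j * (int ((m-1) choose j) + int ((m-1) choose j')) * 2^e"
      unfolding e0 pascal ..
    also have "\<dots> = 2 * ((-1)^j * int ((m-1) choose j) * 2^(e-1)) - (- ((-1)^j)) * int ((m-1) choose j') * 2^e"
      by (rule aux2[OF pw])
    also have "\<dots> = 2 * P k (n-1) j - (if k+1 \<le> n then P k (n-k-1) (j-1) else 0)"
      unfolding e1 e2 sj using kn by simp
    finally show ?thesis .
  qed
qed

lemma bn_rec:
  assumes "1 \<le> n"
  shows "bn k n = 2 * bn k (n-1) - (if k+1 \<le> n then bn k (n-k-1) else 0)"
proof -
  obtain n' where n: "n = Suc n'" using assms by (cases n) auto
  define X where "X = (if k+1 \<le> n then bn k (n-k-1) else 0)"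
  define S where "S = (\<Sum>i\<le>n'. P k n' (Suc i))"
  have s1: "bn k n = P k n 0 + (\<Sum>i\<le>n'. P k n (Suc i))"
    unfolding bn_def n by (rule sum.atMost_Suc_shift)
  have s2a: "(\<Sum>i\<le>n'. P k n (Suc i)) = (\<Sum>i\<le>n'. 2 * P k n' (Suc i) - (if k+1 \<le> n then P k (n-k-1) i else 0))"
    by (rule sum.cong) (use P_rec[of n] n assms in auto)
  have s2b: "(\<Sum>i\<le>n'. 2 * P k n' (Suc i) - (if k+1 \<le> n then P k (n-k-1) i else 0))
     = 2 * S - (if k+1 \<le> n then (\<Sum>i\<le>n'. P k (n-k-1) i) else 0)"
    unfolding S_def by (simp add: sum_subtractf sum_distrib_left)
  have s3: "(if k+1 \<le> n then (\<Sum>i\<le>n'. P k (n-k-1) i) else 0) = X"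
  proof -
    have "(n-k-1) div (k+1) \<le> n-k-1" by (rule div_le_dividend)
    also have "n-k-1 \<le> n'" using n by simp
    finally have "(n-k-1) div (k+1) \<le> n'" .
    then show ?thesis unfolding X_def using bn_range[of "n-k-1" k n'] by simp
  qed
  have s4: "P k n 0 = 2 * P k n' 0" by (simp add: P_def n)
  have s5: "bn k n' = P k n' 0 + S"
  proof -
    have "n' div (k+1) \<le> Suc n'" by (meson div_le_dividend le_SucI)
    then have "bn k n' = (\<Sum>i\<le>Suc n'. P k n' i)" by (rule bn_range)
    then show ?thesis unfolding S_def by (simp only: sum.atMost_Suc_shift)
  qed
  have "bn k n = 2 * bn k n' - X"
    unfolding s1 s2a s2b s3 s4 s5 by (simp add: algebra_simps)
  then show ?thesis unfolding X_def using n by simp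
qed

definition b :: "nat \<Rightarrow> int \<Rightarrow> int" where
  "b k x = (if x < 0 then 0 else bn k (nat x))"

lemma b_rec: assumes "1 \<le> x" shows "b k x = 2 * b k (x-1) - b k (x - int k - 1)"
proof -
  have r: "bn k (nat x) = 2 * bn k (nat x - 1) - (if k+1 \<le> nat x then bn k (nat x-k-1) else 0)"
    using assms by (intro bn_rec) simp
  have e1: "b k x = bn k (nat x)" "b k (x-1) = bn k (nat x - 1)"
    using assms unfolding b_def by (simp_all add: nat_diff_distrib)
  have e2: "b k (x - int k - 1) = (if k+1 \<le> nat x then bn k (nat x-k-1) else 0)"
  proof (cases "k+1 \<le> nat x")
    case True
    then have "\<not> x - int k - 1 < 0" "nat (x - int k - 1) = nat x - k - 1" by linarith+
    then show ?thesis using True unfolding b_def by simp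
  next
    case False
    then have "x - int k - 1 < 0" by linarith
    then show ?thesis using False unfolding b_def by simp
  qed
  show ?thesis unfolding e1 e2 r ..
qed

lemma telescope:
  fixes g :: "int \<Rightarrow> int"
  shows "(\<Sum>i\<in>{1..k}. g (n - int i) - g (n - int i - 1)) = g (n-1) - g (n - int k - 1)"
proof (induction k)
  case 0 then show ?case by simp
next
  case (Suc k)
  have "(\<Sum>i\<in>{1..Suc k}. g (n - int i) - g (n - int i - 1)) =
     (\<Sum>i\<in>{1..k}. g (n - int i) - g (n - int i - 1)) + (g (n - int (Suc k)) - g (n - int (Suc k) - 1))"
    by simp
  also have "n - int (Suc k) = n - int k - 1" by simp
  finally show ?case using Suc by simp
qed

lemma kb_b: "kbonacci k x = b k x - b k (x-1)"
proof (induction k x rule: kbonacci.induct)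
  case (1 k n)
  show ?case
  proof (cases "n < 0")
    case True then show ?thesis by (subst kbonacci.simps) (simp add: b_def)
  next
    case False
    show ?thesis
    proof (cases "n = 0")
      case True then show ?thesis by (subst kbonacci.simps) (simp add: b_def bn_def P_def)
    next
      case nz: False
      have "kbonacci k n = (\<Sum>i\<in>{1..k}. kbonacci k (n - int i))"
        using False nz by (subst kbonacci.simps) simp
      also have "\<dots> = (\<Sum>i\<in>{1..k}. b k (n - int i) - b k (n - int i - 1))"
        by (rule sum.cong) (use 1 False nz in auto)
      also have "\<dots> = b k (n-1) - b k (n - int k - 1)" by (rule telescope)
      also have "\<dots> = b k n - b k (n-1)" using b_rec[of n k] False nz by simp
      finally show ?thesis .
    qed
  qed
qed

theorem corollary3p2:
  fixes k n :: nat
  assumes "k \<ge> 1"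
  shows "real_of_int (kbonacci k (int n)) =
    (\<Sum>j = 0..nat \<lfloor>real n / real (k + 1)\<rfloor>.
       (-1) ^ j
       * ((real (n - j * k) + real j + (if n = 0 then 1 else 0))
          / (2 * real (n - j * k) + (if n = 0 then 1 else 0)))
       * real ((n - j * k) choose j)
       * 2 ^ (n - j * (k + 1)))"
proof -
  define J where "J = n div (k+1)"
  have fl: "\<lfloor>real n / real (k+1)\<rfloor> = int J"
    unfolding J_def using floor_divide_of_nat_eq[of n "k+1"] by simp
  have Jn: "nat \<lfloor>real n / real (k + 1)\<rfloor> = J" using fl by simp
  show ?thesis
  proof (cases "n = 0")
    case True
    then show ?thesis unfolding Jn J_def
      by (subst kbonacci.simps) simp
  next
    case n0: False
    define Q where "Q j = (if j = 0 then 0 else (-1)^j * int ((n - j*k - 1) choose (j-1)) * 2^(n - j*(k+1)))" for j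
    have tm: "(-1) ^ j
       * ((real (n - j * k) + real j + (if n = 0 then 1 else 0))
          / (2 * real (n - j * k) + (if n = 0 then 1 else 0)))
       * real ((n - j * k) choose j)
       * 2 ^ (n - j * (k + 1)) = (real_of_int (P k n j) + real_of_int (Q j)) / 2"
      if jJ: "j \<in> {0..J}" for j
    proof -
      have jn: "j*(k+1) \<le> n" using jJ less_eq_div_iff_mult_less_eq[of "k+1" j n] unfolding J_def by simp
      define m where "m = n - j*k"
      have m1: "m \<ge> 1" unfolding m_def using jn n0 by (cases "j = 0") (auto simp: algebra_simps)
      show ?thesis
      proof (cases "j = 0")
        case True then show ?thesis using n0 by (simp add: P_def Q_def field_simps)
      next
        case False
        have id: "j * (m choose j) = m * ((m-1) choose (j-1))"
          using False by (simp add: times_binomial_minus1_eq)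
        have idr: "real j * real (m choose j) = real m * real ((m-1) choose (j-1))"
          using arg_cong[OF id, of real] by simp
        have "(real m + real j) / (2 * real m) * real (m choose j)
              = (real (m choose j) + real ((m-1) choose (j-1))) / 2"
          using m1 idr by (simp add: field_simps)
        note eq = this
        have "(-1) ^ j
       * ((real (n - j * k) + real j + (if n = 0 then 1 else 0))
          / (2 * real (n - j * k) + (if n = 0 then 1 else 0)))
       * real ((n - j * k) choose j)
       * 2 ^ (n - j * (k + 1)) = (-1)^j * 2 ^ (n - j * (k + 1)) * ((real (m choose j) + real ((m-1) choose (j-1))) / 2)"
          unfolding m_def[symmetric] eq[symmetric]
          by (simp only: n0 if_False add_0_right, simp only: mult_ac)
        also have "\<dots> = (real_of_int (P k n j) + real_of_int (Q j)) / 2"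
          using False unfolding P_def Q_def m_def[symmetric] by (simp add: algebra_simps add_divide_distrib)
        finally show ?thesis .
      qed
    qed
    have S: "(\<Sum>j = 0..J. (-1) ^ j
       * ((real (n - j * k) + real j + (if n = 0 then 1 else 0))
          / (2 * real (n - j * k) + (if n = 0 then 1 else 0)))
       * real ((n - j * k) choose j)
       * 2 ^ (n - j * (k + 1))) = (real_of_int (\<Sum>j\<le>J. P k n j) + real_of_int (\<Sum>j\<le>J. Q j)) / 2"
    proof -
      have "(\<Sum>j = 0..J. (-1) ^ j
       * ((real (n - j * k) + real j + (if n = 0 then 1 else 0))
          / (2 * real (n - j * k) + (if n = 0 then 1 else 0)))
       * real ((n - j * k) choose j)
       * 2 ^ (n - j * (k + 1))) = (\<Sum>j = 0..J. (real_of_int (P k n j) + real_of_int (Q j)) / 2)"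
        by (rule sum.cong[OF refl], rule tm, assumption)
      also have "\<dots> = (real_of_int (\<Sum>j\<le>J. P k n j) + real_of_int (\<Sum>j\<le>J. Q j)) / 2"
        by (simp add: atLeast0AtMost sum.distrib flip: sum_divide_distrib)
      finally show ?thesis .
    qed
    have SP: "(\<Sum>j\<le>J. P k n j) = bn k n" using bn_range[of n k J] unfolding J_def by simp
    have SQ: "(\<Sum>j\<le>J. Q j) = - (if k+1 \<le> n then bn k (n-k-1) else 0)"
    proof (cases J)
      case 0
      then have "n < k+1" unfolding J_def using div_less_iff_less_mult[of "k+1" n 1] by simp
      then show ?thesis using 0 by (simp add: Q_def)
    next
      case (Suc J')
      have kn: "k+1 \<le> n" using Suc less_eq_div_iff_mult_less_eq[of "k+1" 1 n] unfolding J_def by simp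
      have J': "(n-k-1) div (k+1) = J'" using le_div_geq[of "k+1" n] kn Suc unfolding J_def by simp
      have "(\<Sum>j\<le>J. Q j) = Q 0 + (\<Sum>i\<le>J'. Q (Suc i))" unfolding Suc by (rule sum.atMost_Suc_shift)
      also have "\<dots> = - (\<Sum>i\<le>J'. P k (n-k-1) i)"
      proof -
        have "Q (Suc i) = - P k (n-k-1) i" for i
        proof -
          have a: "n - Suc i * k - 1 = n - k - 1 - i*k" by simp
          have b: "n - Suc i * (k+1) = n - k - 1 - i*(k+1)" by simp
          show ?thesis unfolding Q_def P_def a b by simp
        qed
        then show ?thesis by (simp add: Q_def sum_negf)
      qed
      also have "\<dots> = - bn k (n-k-1)" using bn_range[of "n-k-1" k J'] J' by simp
      finally show ?thesis using kn by simp
    qed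
    have kb: "kbonacci k (int n) = bn k n - bn k (n-1)"
      using kb_b[of k "int n"] n0 unfolding b_def by (simp add: nat_diff_distrib)
    have rec: "bn k n = 2 * bn k (n-1) - (if k+1 \<le> n then bn k (n-k-1) else 0)"
      using n0 by (intro bn_rec) simp
    show ?thesis unfolding Jn S SP SQ kb using rec by simp
  qed
qed

end
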